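(* For every integer $n\ge1$, $$F_{2n-1}=\sum_{(a_1,\dots,a_k)\in C(n)}2^{\#\{i\,:\,a_i=1\}+n-2k},$$ where $k$ is the number of parts of the composition.
   Context: $C(n)$ is the set of all compositions $(a_1,\dots,a_k)$ of $n$ (sequences of positive integers with sum $n$, any number of parts). Fibonacci numbers: $F_0=0$, $F_1=1$, $F_n=F_{n-1}+F_{n-2}$. *)

theory Defs
  imports Complex_Main "HOL-Number_Theory.Fib"
begin

definition compositions :: "nat \<Rightarrow> nat list set" where
  "compositions n = {xs. (\<forall>a\<in>set xs. a > 0) \<and> sum_list xs = n}"

end

theory Submission
  imports Defs
begin

definition ex :: "nat list \<Rightarrow> int" where
  "ex xs = int (length (filter (\<lambda>a. a = 1) xs)) + int (sum_list xs) - 2 * int (length xs)"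

definition f :: "nat list \<Rightarrow> real" where
  "f xs = (2::real) powi ex xs"

lemma f_one: "f (1 # xs) = f xs"
  unfolding f_def ex_def by simp

lemma f_suc: "a \<ge> 1 \<Longrightarrow> f (Suc a # xs) = (if a = 1 then 1 else 2) * f (a # xs)"
proof -
  assume a: "a \<ge> 1"
  have "ex (Suc a # xs) = ex (a # xs) + (if a = 1 then 0 else 1)"
    using a unfolding ex_def by auto
  then show ?thesis unfolding f_def
    by (simp add: power_int_add)
qed

lemma len_le: "\<forall>a\<in>set xs. a > 0 \<Longrightarrow> length xs \<le> sum_list xs"
  by (induction xs) auto

lemma fin: "finite (compositions n)"
proof -
  have "compositions n \<subseteq> {xs. set xs \<subseteq> {0..n} \<and> length xs \<le> n}"
    unfolding compositions_def using len_le member_le_sum_list by fastforce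
  moreover have "finite {xs. set xs \<subseteq> {0..n} \<and> length xs \<le> n}"
    by (rule finite_lists_length_le) simp
  ultimately show ?thesis by (rule finite_subset)
qed

definition A :: "nat \<Rightarrow> real" where
  "A n = sum f (compositions n \<inter> {xs. xs \<noteq> [] \<and> hd xs = 1})"
definition B :: "nat \<Rightarrow> real" where
  "B n = sum f (compositions n \<inter> {xs. xs \<noteq> [] \<and> hd xs \<noteq> 1})"

lemma S_split: "n \<ge> 1 \<Longrightarrow> sum f (compositions n) = A n + B n"
proof -
  assume n: "n \<ge> 1"
  have "compositions n = (compositions n \<inter> {xs. xs \<noteq> [] \<and> hd xs = 1})
     \<union> (compositions n \<inter> {xs. xs \<noteq> [] \<and> hd xs \<noteq> 1})"
    using n unfolding compositions_def by auto
  then have "sum f (compositions n) = sum f ((compositions n \<inter> {xs. xs \<noteq> [] \<and> hd xs = 1})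
     \<union> (compositions n \<inter> {xs. xs \<noteq> [] \<and> hd xs \<noteq> 1}))" by simp
  also have "\<dots> = A n + B n" unfolding A_def B_def
    by (rule sum.union_disjoint) (auto intro: finite_subset[OF _ fin])
  finally show ?thesis .
qed

lemma A_rec: "A (Suc n) = sum f (compositions n)"
proof -
  have "compositions (Suc n) \<inter> {xs. xs \<noteq> [] \<and> hd xs = 1} = (Cons 1) ` compositions n"
  proof (rule set_eqI, rule iffI)
    fix xs assume "xs \<in> compositions (Suc n) \<inter> {xs. xs \<noteq> [] \<and> hd xs = 1}"
    then show "xs \<in> (Cons 1) ` compositions n"
      unfolding compositions_def by (cases xs) auto
  qed (auto simp: compositions_def)
  then have "A (Suc n) = sum f ((Cons 1) ` compositions n)" unfolding A_def by simp
  also have "\<dots> = sum (f \<circ> Cons 1) (compositions n)" by (rule sum.reindex) simp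
  also have "\<dots> = sum f (compositions n)" using f_one by (simp add: o_def)
  finally show ?thesis .
qed

fun g :: "nat list \<Rightarrow> nat list" where
  "g [] = []" | "g (a # xs) = Suc a # xs"

lemma B_rec: "n \<ge> 1 \<Longrightarrow> B (Suc n) = A n + 2 * B n"
proof -
  assume n: "n \<ge> 1"
  let ?C = "compositions n"
  have "compositions (Suc n) \<inter> {xs. xs \<noteq> [] \<and> hd xs \<noteq> 1} = g ` ?C"
  proof (rule set_eqI, rule iffI)
    fix xs assume xs: "xs \<in> compositions (Suc n) \<inter> {xs. xs \<noteq> [] \<and> hd xs \<noteq> 1}"
    then obtain a ys where e: "xs = a # ys" by (cases xs) auto
    with xs have "a \<ge> 2" unfolding compositions_def by auto
    then have "xs = g ((a - 1) # ys)" using e by simp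
    moreover have "(a - 1) # ys \<in> ?C" using xs e \<open>a \<ge> 2\<close> unfolding compositions_def by auto
    ultimately show "xs \<in> g ` ?C" by blast
  next
    fix xs assume "xs \<in> g ` ?C"
    then obtain ys where ys: "ys \<in> ?C" "xs = g ys" by blast
    then obtain a zs where e: "ys = a # zs" using n unfolding compositions_def by (cases ys) auto
    show "xs \<in> compositions (Suc n) \<inter> {xs. xs \<noteq> [] \<and> hd xs \<noteq> 1}"
      using ys e unfolding compositions_def by auto
  qed
  then have "B (Suc n) = sum f (g ` ?C)" unfolding B_def by simp
  also have "\<dots> = sum (f \<circ> g) ?C"
  proof (rule sum.reindex, rule inj_onI)
    fix x y assume "x \<in> ?C" "y \<in> ?C" "g x = g y"
    then show "x = y" using n unfolding compositions_def
      by (cases x; cases y) auto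
  qed
  also have "\<dots> = sum (f \<circ> g) (?C \<inter> {xs. xs \<noteq> [] \<and> hd xs = 1})
      + sum (f \<circ> g) (?C \<inter> {xs. xs \<noteq> [] \<and> hd xs \<noteq> 1})"
  proof -
    have "?C = (?C \<inter> {xs. xs \<noteq> [] \<and> hd xs = 1}) \<union> (?C \<inter> {xs. xs \<noteq> [] \<and> hd xs \<noteq> 1})"
      using n unfolding compositions_def by auto
    then have "sum (f \<circ> g) ?C = sum (f \<circ> g) ((?C \<inter> {xs. xs \<noteq> [] \<and> hd xs = 1}) \<union> (?C \<inter> {xs. xs \<noteq> [] \<and> hd xs \<noteq> 1}))"
      by simp
    also have "\<dots> = sum (f \<circ> g) (?C \<inter> {xs. xs \<noteq> [] \<and> hd xs = 1})
      + sum (f \<circ> g) (?C \<inter> {xs. xs \<noteq> [] \<and> hd xs \<noteq> 1})"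
      by (rule sum.union_disjoint) (auto intro: finite_subset[OF _ fin])
    finally show ?thesis .
  qed
  also have "sum (f \<circ> g) (?C \<inter> {xs. xs \<noteq> [] \<and> hd xs = 1}) = A n"
    unfolding A_def
  proof (rule sum.cong)
    fix xs assume "xs \<in> ?C \<inter> {xs. xs \<noteq> [] \<and> hd xs = 1}"
    then obtain zs where "xs = 1 # zs" by (cases xs) auto
    then show "(f \<circ> g) xs = f xs" using f_suc[of 1 zs] by simp
  qed simp
  also have "sum (f \<circ> g) (?C \<inter> {xs. xs \<noteq> [] \<and> hd xs \<noteq> 1}) = 2 * B n"
    unfolding B_def sum_distrib_left
  proof (rule sum.cong)
    fix xs assume xs: "xs \<in> ?C \<inter> {xs. xs \<noteq> [] \<and> hd xs \<noteq> 1}"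
    then obtain a zs where e: "xs = a # zs" by (cases xs) auto
    with xs have "a \<ge> 2" unfolding compositions_def by auto
    then show "(f \<circ> g) xs = 2 * f xs" using f_suc[of a zs] e by simp
  qed simp
  finally show ?thesis .
qed

lemma main: "n \<ge> 1 \<Longrightarrow> sum f (compositions n) = fib (2*n-1) \<and> B n = fib (2*n-2)"
proof (induction n rule: nat_induct_at_least)
  case base
  have c1: "compositions 1 = {[1]}"
  proof (rule set_eqI, rule iffI)
    fix xs assume "xs \<in> compositions 1"
    then have "(\<forall>a\<in>set xs. a > 0) \<and> sum_list xs = 1" unfolding compositions_def by simp
    then show "xs \<in> {[1]}"
    proof (cases xs)
      case (Cons a ys)
      with \<open>(\<forall>a\<in>set xs. a > 0) \<and> sum_list xs = 1\<close> have "a = 1" "sum_list ys = 0" by (auto simp del: sum_list_eq_0_iff)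
      moreover have "\<forall>a\<in>set ys. a > 0" using Cons \<open>(\<forall>a\<in>set xs. a > 0) \<and> sum_list xs = 1\<close> by auto
      ultimately show ?thesis using Cons by (cases ys) (auto simp: sum_list_eq_0_iff)
    qed auto
  qed (simp add: compositions_def)
  show ?case unfolding B_def c1 by (simp add: f_def ex_def)
next
  case (Suc n)
  have S: "sum f (compositions (Suc n)) = A (Suc n) + B (Suc n)" by (rule S_split) simp
  have AB: "A n = sum f (compositions n) - B n" using S_split[OF Suc.hyps] by simp
  obtain m where m: "n = Suc m" using Suc.hyps by (cases n) auto
  have f1: "fib (2 * Suc n - 1) = fib (2*n-1) + fib (2*n)" using m
    by (simp add: numeral_2_eq_2 fib_add)
  have f2: "fib (2 * Suc n - 2) = fib (2*n-1) + fib (2*n-2)" using m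
    by (simp add: numeral_2_eq_2)
  have f3: "fib (2*n) = fib (2*n-1) + fib (2*n-2)" using m
    by (simp add: numeral_2_eq_2)
  show ?case using Suc.IH S A_rec[of n] B_rec[OF Suc.hyps] AB f1 f2 f3 by simp
qed

theorem mainTheorem14:
  fixes n :: nat
  assumes "n \<ge> 1"
  shows "real (fib (2 * n - 1)) =
    (\<Sum>xs\<in>compositions n.
       (2::real) powi (int (length (filter (\<lambda>a. a = 1) xs)) + int n - 2 * int (length xs)))"
proof -
  have "(\<Sum>xs\<in>compositions n.
       (2::real) powi (int (length (filter (\<lambda>a. a = 1) xs)) + int n - 2 * int (length xs)))
     = sum f (compositions n)"
    by (rule sum.cong) (auto simp: f_def ex_def compositions_def)
  then show ?thesis using main[OF assms] by simp
qed

end
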